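(* Let $p\in\mathbb{R}[\mathbf{x}]$ be a homogeneous polynomial of degree $d$ in $n$ variables and let $r\in\mathbb{N}$. Define \[ p^{(r)}=\max\Big\{\lambda\in\mathbb{R}:\ \Big(\sum_{i=1}^nx_i\Big)^r\Big(p(\mathbf{x})-\lambda\Big(\sum_{i=1}^nx_i\Big)^d\Big)\ \text{has only nonnegative coefficients}\Big\}, \] and let $\underline{f}_{\mathrm{LP}}^{(r+d)}$ be the optimal value of the linear program \[ \min\ L(p)\quad\text{s.t.}\quad L(1)=1,\quad L(1)\le 1,\quad L(\mathbf{x}^\alpha)\ge 0\ (|\alpha|\le r+d),\quad L(\mathbf{x}^\alpha)=L\Big(\mathbf{x}^\alpha\sum_{i=1}^nx_i\Big)\ (|\alpha|\le r+d-1), \] over linear functionals $L:\mathbb{R}[\mathbf{x}]_{r+d}\to\mathbb{R}$ (this is the LP relaxation of order $r+d$ of $\min_{\mathbf{x}\in\Delta_{n-1}}p(\mathbf{x})=\inf\{\int_{\Delta_{n-1}}p\,\mathrm{d}\mu:\mu\in\mathcal{M}(\Delta_{n-1})_+,\ \int_{\Delta_{n-1}}\mathrm{d}\mu=1\}$). Then $p^{(r)}=\underline{f}_{\mathrm{LP}}^{(r+d)}$.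
   Context: $\Delta_{n-1}=\{\mathbf{x}\in\mathbb{R}^n_+:x_1+\dots+x_n=1\}$; $\mathcal{M}(\Delta_{n-1})_+$ is the cone of positive finite Borel measures on $\Delta_{n-1}$; $\mathbb{R}[\mathbf{x}]_{r+d}$ is the space of real polynomials of degree at most $r+d$; $\mathbf{x}^\alpha=x_1^{\alpha_1}\cdots x_n^{\alpha_n}$, $|\alpha|=\sum_i\alpha_i$. *)

theory Defs
  imports "HOL-Analysis.Analysis" "HOL-Library.Poly_Mapping"
begin

text \<open>Real polynomials in the variables x_0, x_1, ... : finitely supported maps from
  exponent vectors (alpha :: nat =>0 nat) to real coefficients; multiplication is the
  usual polynomial product (convolution).\<close>

type_synonym mpoly = "(nat \<Rightarrow>\<^sub>0 nat) \<Rightarrow>\<^sub>0 real"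

definition tdeg :: "(nat \<Rightarrow>\<^sub>0 nat) \<Rightarrow> nat" where
  "tdeg \<alpha> = (\<Sum>i\<in>Poly_Mapping.keys \<alpha>. Poly_Mapping.lookup \<alpha> i)"

definition var :: "nat \<Rightarrow> mpoly" where
  "var i = Poly_Mapping.single (Poly_Mapping.single i 1) 1"

definition const :: "real \<Rightarrow> mpoly" where
  "const c = Poly_Mapping.single 0 c"

text \<open>x_1 + ... + x_n (indices 0..n-1)\<close>
definition sumvars :: "nat \<Rightarrow> mpoly" where
  "sumvars n = (\<Sum>i<n. var i)"

definition homogeneous_in :: "nat \<Rightarrow> nat \<Rightarrow> mpoly \<Rightarrow> bool" where
  "homogeneous_in n d p \<longleftrightarrow>
     (\<forall>\<alpha>\<in>Poly_Mapping.keys p. Poly_Mapping.keys \<alpha> \<subseteq> {..<n} \<and> tdeg \<alpha> = d)"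

definition polya_bound :: "nat \<Rightarrow> nat \<Rightarrow> nat \<Rightarrow> mpoly \<Rightarrow> real" where
  "polya_bound n d r p = Sup {lam. \<forall>\<alpha>.
     Poly_Mapping.lookup (sumvars n ^ r * (p - const lam * sumvars n ^ d)) \<alpha> \<ge> 0}"

text \<open>A linear functional L on R[x]_k (polynomials in x_0..x_{n-1} of degree \<le> k) is
  determined by its values y alpha = L(x^alpha) on the monomial basis; values of y outside
  that basis are irrelevant.\<close>
definition apply_functional :: "((nat \<Rightarrow>\<^sub>0 nat) \<Rightarrow> real) \<Rightarrow> mpoly \<Rightarrow> real" where
  "apply_functional y q = (\<Sum>\<alpha>\<in>Poly_Mapping.keys q. Poly_Mapping.lookup q \<alpha> * y \<alpha>)"

definition mono_set :: "nat \<Rightarrow> nat \<Rightarrow> (nat \<Rightarrow>\<^sub>0 nat) set" where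
  "mono_set n k = {\<alpha>. Poly_Mapping.keys \<alpha> \<subseteq> {..<n} \<and> tdeg \<alpha> \<le> k}"

definition lp_feasible :: "nat \<Rightarrow> nat \<Rightarrow> ((nat \<Rightarrow>\<^sub>0 nat) \<Rightarrow> real) \<Rightarrow> bool" where
  "lp_feasible n k y \<longleftrightarrow>
     apply_functional y 1 = 1 \<and> apply_functional y 1 \<le> 1 \<and>
     (\<forall>\<alpha>\<in>mono_set n k. apply_functional y (Poly_Mapping.single \<alpha> 1) \<ge> 0) \<and>
     (\<forall>\<alpha>\<in>mono_set n k. tdeg \<alpha> + 1 \<le> k \<longrightarrow>
        apply_functional y (Poly_Mapping.single \<alpha> 1) =
        apply_functional y (Poly_Mapping.single \<alpha> 1 * sumvars n))"

definition lp_value :: "nat \<Rightarrow> nat \<Rightarrow> mpoly \<Rightarrow> real" where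
  "lp_value n k p = Inf {apply_functional y p | y. lp_feasible n k y}"

end

theory Submission
  imports Defs
begin


lemma lookup_cmul: "Poly_Mapping.lookup (const c * f) a = c * Poly_Mapping.lookup f a"
  unfolding const_def mult_map_scale_conv_mult[symmetric]
  by (simp add: map.rep_eq when_def)

lemma tdeg_sup: "finite S \<Longrightarrow> Poly_Mapping.keys \<alpha> \<subseteq> S \<Longrightarrow> tdeg \<alpha> = (\<Sum>i\<in>S. Poly_Mapping.lookup \<alpha> i)"
  unfolding tdeg_def by (rule sum.mono_neutral_left) (auto simp: in_keys_iff)

lemma tdeg_add: "tdeg (a + b) = tdeg a + tdeg b"
proof -
  let ?S = "Poly_Mapping.keys a \<union> Poly_Mapping.keys b"
  have f: "finite ?S" by simp
  have "tdeg (a+b) = (\<Sum>i\<in>?S. Poly_Mapping.lookup (a+b) i)"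
    using keys_add[of a b] by (intro tdeg_sup f) auto
  also have "\<dots> = (\<Sum>i\<in>?S. Poly_Mapping.lookup a i) + (\<Sum>i\<in>?S. Poly_Mapping.lookup b i)"
    by (simp add: lookup_add sum.distrib)
  also have "\<dots> = tdeg a + tdeg b"
    using tdeg_sup[OF f, of a] tdeg_sup[OF f, of b] by auto
  finally show ?thesis .
qed

lemma tdeg_zero[simp]: "tdeg 0 = 0" by (simp add: tdeg_def)
lemma tdeg_single1[simp]: "tdeg (Poly_Mapping.single i (1::nat)) = 1" by (simp add: tdeg_def)
lemma tdeg_single[simp]: "tdeg (Poly_Mapping.single i (k::nat)) = k" by (simp add: tdeg_def)

lemma hom_mult:
  assumes "homogeneous_in n a f" "homogeneous_in n b g"
  shows "homogeneous_in n (a+b) (f*g)"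
  using assms keys_mult[of f g] unfolding homogeneous_in_def
  by (fastforce simp: tdeg_add dest!: subsetD[OF keys_add])

lemma hom_add: "homogeneous_in n a f \<Longrightarrow> homogeneous_in n a g \<Longrightarrow> homogeneous_in n a (f+g)"
  unfolding homogeneous_in_def using keys_add[of f g] by blast
lemma hom_diff: "homogeneous_in n a f \<Longrightarrow> homogeneous_in n a g \<Longrightarrow> homogeneous_in n a (f-g)"
  unfolding homogeneous_in_def using keys_diff[of f g] by blast
lemma hom_zero[simp]: "homogeneous_in n a 0" unfolding homogeneous_in_def by simp
lemma hom_one[simp]: "homogeneous_in n 0 1" unfolding homogeneous_in_def by simp
lemma hom_const[simp]: "homogeneous_in n 0 (const c)" unfolding homogeneous_in_def const_def by simp
lemma hom_cmul: "homogeneous_in n a f \<Longrightarrow> homogeneous_in n a (const c * f)"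
  using hom_mult[OF hom_const] by fastforce
lemma hom_sum: "(\<And>i. i \<in> I \<Longrightarrow> homogeneous_in n a (f i)) \<Longrightarrow> homogeneous_in n a (sum f I)"
  by (induction I rule: infinite_finite_induct) (auto intro: hom_add)
lemma hom_var: "i < n \<Longrightarrow> homogeneous_in n 1 (var i)"
  unfolding homogeneous_in_def var_def by simp
lemma hom_s: "homogeneous_in n 1 (sumvars n)"
  unfolding sumvars_def by (rule hom_sum) (metis lessThan_iff hom_var)
lemma hom_spow: "homogeneous_in n j (sumvars n ^ j)"
  by (induction j) (auto dest: hom_mult[OF hom_s])



lemma af_sup: "finite A \<Longrightarrow> Poly_Mapping.keys q \<subseteq> A \<Longrightarrow>
  apply_functional y q = (\<Sum>\<alpha>\<in>A. Poly_Mapping.lookup q \<alpha> * y \<alpha>)"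
  unfolding apply_functional_def by (rule sum.mono_neutral_left) (auto simp: in_keys_iff)

lemma af_add: "apply_functional y (f + g) = apply_functional y f + apply_functional y g"
proof -
  let ?S = "Poly_Mapping.keys f \<union> Poly_Mapping.keys g"
  have fi: "finite ?S" by simp
  have "apply_functional y (f + g) = (\<Sum>\<alpha>\<in>?S. Poly_Mapping.lookup (f+g) \<alpha> * y \<alpha>)"
    using keys_add[of f g] by (intro af_sup fi) auto
  also have "\<dots> = (\<Sum>\<alpha>\<in>?S. Poly_Mapping.lookup f \<alpha> * y \<alpha>) + (\<Sum>\<alpha>\<in>?S. Poly_Mapping.lookup g \<alpha> * y \<alpha>)"
    by (simp add: lookup_add sum.distrib distrib_right)
  also have "\<dots> = apply_functional y f + apply_functional y g"
    using af_sup[OF fi, of f y] af_sup[OF fi, of g y] by auto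
  finally show ?thesis .
qed

lemma af_zero[simp]: "apply_functional y 0 = 0" by (simp add: apply_functional_def)

lemma af_diff: "apply_functional y (f - g) = apply_functional y f - apply_functional y g"
  using af_add[of y "f - g" g] by simp

lemma af_cmul: "apply_functional y (const c * f) = c * apply_functional y f"
proof -
  have fi: "finite (Poly_Mapping.keys f)" by simp
  have "Poly_Mapping.keys (const c * f) \<subseteq> Poly_Mapping.keys f"
    by (auto simp: in_keys_iff lookup_cmul)
  then have "apply_functional y (const c * f) = (\<Sum>\<alpha>\<in>Poly_Mapping.keys f. Poly_Mapping.lookup (const c * f) \<alpha> * y \<alpha>)"
    by (intro af_sup fi)
  also have "\<dots> = c * apply_functional y f"
    by (simp add: lookup_cmul apply_functional_def sum_distrib_left mult.assoc)
  finally show ?thesis .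
qed

lemma af_sum: "apply_functional y (sum f I) = (\<Sum>i\<in>I. apply_functional y (f i))"
  by (induction I rule: infinite_finite_induct) (auto simp: af_add)

lemma af_single: "apply_functional y (Poly_Mapping.single \<alpha> 1) = y \<alpha>"
  by (simp add: apply_functional_def)

lemma af_one: "apply_functional y 1 = y 0"
  by (simp add: apply_functional_def)

lemma decomp: "q = (\<Sum>\<alpha>\<in>Poly_Mapping.keys q. const (Poly_Mapping.lookup q \<alpha>) * Poly_Mapping.single \<alpha> 1)"
proof (rule poly_mapping_eqI)
  fix b
  show "Poly_Mapping.lookup q b = Poly_Mapping.lookup (\<Sum>\<alpha>\<in>Poly_Mapping.keys q. const (Poly_Mapping.lookup q \<alpha>) * Poly_Mapping.single \<alpha> 1) b"
  proof -
    have e: "(\<lambda>x. Poly_Mapping.lookup q x * (if x = b then 1 else 0)) = (\<lambda>x. if x = b then Poly_Mapping.lookup q x else 0)"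
      by auto
    show ?thesis
      apply (simp add: lookup_sum lookup_cmul lookup_single when_def)
      apply (subst e)
      apply (simp add: in_keys_iff)
      done
  qed
qed

lemma af_step:
  assumes "lp_feasible n k y" "homogeneous_in n j q" "j + 1 \<le> k"
  shows "apply_functional y (q * sumvars n) = apply_functional y q"
proof -
  let ?c = "Poly_Mapping.lookup q"
  have "q * sumvars n = (\<Sum>\<alpha>\<in>Poly_Mapping.keys q. const (?c \<alpha>) * (Poly_Mapping.single \<alpha> 1 * sumvars n))"
    by (subst decomp) (simp add: sum_distrib_right mult.assoc)
  then have "apply_functional y (q * sumvars n) = (\<Sum>\<alpha>\<in>Poly_Mapping.keys q. ?c \<alpha> * apply_functional y (Poly_Mapping.single \<alpha> 1 * sumvars n))"
    by (simp add: af_sum af_cmul)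
  also have "\<dots> = (\<Sum>\<alpha>\<in>Poly_Mapping.keys q. ?c \<alpha> * y \<alpha>)"
  proof (rule sum.cong)
    fix \<alpha> assume a: "\<alpha> \<in> Poly_Mapping.keys q"
    then have "\<alpha> \<in> mono_set n k" "tdeg \<alpha> + 1 \<le> k"
      using assms(2,3) unfolding homogeneous_in_def mono_set_def by auto
    then show "?c \<alpha> * apply_functional y (Poly_Mapping.single \<alpha> 1 * sumvars n) = ?c \<alpha> * y \<alpha>"
      using assms(1) unfolding lp_feasible_def by (simp add: af_single)
  qed simp
  finally show ?thesis by (simp add: apply_functional_def)
qed

lemma af_reduce:
  assumes "lp_feasible n k y" "homogeneous_in n j q" "j + m \<le> k"
  shows "apply_functional y (q * sumvars n ^ m) = apply_functional y q"
  using assms(3)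
proof (induction m)
  case (Suc m)
  have h: "homogeneous_in n (j+m) (q * sumvars n ^ m)" by (rule hom_mult[OF assms(2) hom_spow])
  have "apply_functional y (q * sumvars n ^ Suc m) = apply_functional y ((q * sumvars n ^ m) * sumvars n)"
    by (simp add: algebra_simps)
  also have "\<dots> = apply_functional y (q * sumvars n ^ m)"
    by (rule af_step[OF assms(1) h]) (use Suc in simp)
  finally show ?case using Suc by simp
qed simp

lemma af_nonneg:
  assumes "lp_feasible n k y" "homogeneous_in n j q" "j \<le> k" "\<And>\<alpha>. Poly_Mapping.lookup q \<alpha> \<ge> 0"
  shows "apply_functional y q \<ge> 0"
  unfolding apply_functional_def
proof (rule sum_nonneg)
  fix \<alpha> assume "\<alpha> \<in> Poly_Mapping.keys q"
  then have "\<alpha> \<in> mono_set n k" using assms(2,3) unfolding homogeneous_in_def mono_set_def by auto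
  then have "y \<alpha> \<ge> 0" using assms(1) unfolding lp_feasible_def by (simp add: af_single)
  then show "Poly_Mapping.lookup q \<alpha> * y \<alpha> \<ge> 0" using assms(4) by simp
qed

lemma lower:
  assumes "lp_feasible n (r+d) y" "homogeneous_in n d p"
    and "\<forall>\<alpha>. Poly_Mapping.lookup (sumvars n ^ r * (p - const lam * sumvars n ^ d)) \<alpha> \<ge> 0"
  shows "lam \<le> apply_functional y p"
proof -
  let ?s = "sumvars n"
  have h: "homogeneous_in n (r+d) (?s ^ r * (p - const lam * ?s ^ d))"
    by (intro hom_mult hom_diff hom_spow assms(2) hom_cmul[where a=d, simplified])
  have "0 \<le> apply_functional y (?s ^ r * (p - const lam * ?s ^ d))"
    using af_nonneg[OF assms(1) h _ ] assms(3) by simp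
  also have "?s ^ r * (p - const lam * ?s ^ d) = p * ?s ^ r - const lam * (1 * ?s ^ (r+d))"
    by (simp add: algebra_simps power_add)
  also have "apply_functional y \<dots> = apply_functional y p - lam"
    using af_reduce[OF assms(1) assms(2), of r] af_reduce[OF assms(1) hom_one, of "r+d"]
      assms(1) unfolding lp_feasible_def
    by (simp add: af_diff af_cmul)
  finally show ?thesis by simp
qed



definition nn :: "mpoly \<Rightarrow> bool" where "nn f \<longleftrightarrow> (\<forall>a. Poly_Mapping.lookup f a \<ge> 0)"

lemma Sum_any_nonneg: "(\<And>a. (f a::real) \<ge> 0) \<Longrightarrow> Sum_any f \<ge> 0"
  by (simp add: Sum_any.expand_set sum_nonneg)

lemma nn_mult: "nn f \<Longrightarrow> nn g \<Longrightarrow> nn (f * g)"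
  unfolding nn_def lookup_mult
  by (auto intro!: Sum_any_nonneg mult_nonneg_nonneg simp: when_def)

lemma nn_single: "c \<ge> 0 \<Longrightarrow> nn (Poly_Mapping.single a c)"
  unfolding nn_def by (simp add: lookup_single when_def)

lemma nn_one: "nn 1" unfolding nn_def by (simp add: lookup_one when_def)

lemma nn_s: "nn (sumvars n)"
  unfolding nn_def sumvars_def var_def by (auto simp: lookup_sum lookup_single when_def intro!: sum_nonneg)

lemma nn_spow: "nn (sumvars n ^ j)"
  by (induction j) (auto intro: nn_one nn_mult nn_s)

lemma lookup_single_mult: "Poly_Mapping.lookup (Poly_Mapping.single e c * (f::mpoly)) (e + b) = c * Poly_Mapping.lookup f b"
proof -
  have e: "(\<lambda>q. Poly_Mapping.lookup f q when e + b = e + q) = (\<lambda>q. Poly_Mapping.lookup f q when b = q)"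
    by (simp add: add_left_cancel)
  show ?thesis unfolding lookup_mult lookup_single
    by (simp add: when_mult e)
qed

lemma tdeg_zero_iff: "tdeg \<beta> = 0 \<longleftrightarrow> \<beta> = 0"
proof
  assume "tdeg \<beta> = 0"
  then have "\<forall>i\<in>Poly_Mapping.keys \<beta>. Poly_Mapping.lookup \<beta> i = 0"
    unfolding tdeg_def by (subst (asm) sum_eq_0_iff) auto
  then show "\<beta> = 0" by (metis in_keys_iff keys_eq_empty ex_in_conv)
qed simp

lemma pos:
  assumes "Poly_Mapping.keys \<beta> \<subseteq> {..<n}" "tdeg \<beta> = k"
  shows "Poly_Mapping.lookup (sumvars n ^ k) \<beta> > 0"
  using assms
proof (induction k arbitrary: \<beta>)
  case 0
  then show ?case by (simp add: tdeg_zero_iff)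
next
  case (Suc k)
  then have "\<beta> \<noteq> 0" by auto
  then obtain i where i: "i \<in> Poly_Mapping.keys \<beta>" by (metis keys_eq_empty ex_in_conv)
  then have "i < n" using Suc.prems by auto
  define \<beta>' where "\<beta>' = \<beta> - Poly_Mapping.single i 1"
  have eq: "\<beta> = Poly_Mapping.single i 1 + \<beta>'"
    using i unfolding \<beta>'_def
    by (intro poly_mapping_eqI) (auto simp: lookup_add minus_poly_mapping.rep_eq lookup_single when_def in_keys_iff)
  have t: "tdeg \<beta>' = k" using Suc.prems(2) eq tdeg_add[of "Poly_Mapping.single i 1" \<beta>'] by simp
  have kk: "Poly_Mapping.keys \<beta>' \<subseteq> {..<n}"
  proof -
    have "Poly_Mapping.keys \<beta>' \<subseteq> Poly_Mapping.keys \<beta>"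
    proof
      fix x assume "x \<in> Poly_Mapping.keys \<beta>'"
      then have "Poly_Mapping.lookup \<beta> x \<noteq> 0" by (subst eq) (simp add: lookup_add in_keys_iff)
      then show "x \<in> Poly_Mapping.keys \<beta>" by (simp add: in_keys_iff)
    qed
    then show ?thesis using Suc.prems(1) by blast
  qed
  have IH: "Poly_Mapping.lookup (sumvars n ^ k) \<beta>' > 0" by (rule Suc.IH[OF kk t])
  have "Poly_Mapping.lookup (sumvars n ^ Suc k) \<beta> = (\<Sum>j<n. Poly_Mapping.lookup (var j * sumvars n ^ k) \<beta>)"
    by (simp add: sumvars_def sum_distrib_right lookup_sum)
  also have "\<dots> \<ge> Poly_Mapping.lookup (var i * sumvars n ^ k) \<beta>"
  proof -
    have "\<forall>j a. Poly_Mapping.lookup (var j * sumvars n ^ k) a \<ge> 0"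
      using nn_mult[OF nn_single nn_spow] unfolding nn_def var_def by simp
    then show ?thesis using \<open>i < n\<close> by (intro member_le_sum) auto
  qed
  moreover have "Poly_Mapping.lookup (var i * sumvars n ^ k) \<beta> = Poly_Mapping.lookup (sumvars n ^ k) \<beta>'"
    unfolding var_def by (subst eq, subst lookup_single_mult) simp
  ultimately show ?case using IH by linarith
qed



theorem theorem11:
  fixes n d r :: nat and p :: mpoly
  assumes "n \<ge> 1"
    and hp: "homogeneous_in n d p"
  shows "polya_bound n d r p = lp_value n (r + d) p"
proof -
  define s where "s = sumvars n"
  define k where "k = r + d"
  define m where "m = (\<lambda>\<beta>. Poly_Mapping.lookup (s ^ k) \<beta>)"
  define c where "c = (\<lambda>\<beta>. Poly_Mapping.lookup (s ^ r * p) \<beta>)"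
  define K where "K = Poly_Mapping.keys (s ^ k)"
  have hsk: "homogeneous_in n k (s ^ k)" unfolding s_def by (rule hom_spow)
  have hc: "homogeneous_in n k (s ^ r * p)" unfolding s_def k_def by (rule hom_mult[OF hom_spow hp])
  have mpos: "m \<beta> > 0" if "\<beta> \<in> K" for \<beta>
    using that hsk pos[of \<beta> n k] unfolding K_def m_def s_def homogeneous_in_def by auto
  have "Poly_Mapping.keys (Poly_Mapping.single 0 k) \<subseteq> {..<n}" using assms(1) by auto
  then have "Poly_Mapping.lookup (s ^ k) (Poly_Mapping.single 0 k) > 0"
    using pos[of "Poly_Mapping.single 0 k" n k] unfolding s_def by simp
  then have "Poly_Mapping.single 0 k \<in> K"
    unfolding K_def by (simp add: in_keys_iff)
  then have Kne: "K \<noteq> {}" by auto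
  have Kfin: "finite K" unfolding K_def by simp
  define f where "f = (\<lambda>\<beta>. c \<beta> / m \<beta>)"
  have "Min (f ` K) \<in> f ` K" by (rule Min_in) (use Kfin Kne in auto)
  then obtain \<beta>0 where b0: "\<beta>0 \<in> K" and fb0: "f \<beta>0 = Min (f ` K)" by auto
  have b0min: "c \<beta>0 / m \<beta>0 \<le> c \<beta> / m \<beta>" if "\<beta> \<in> K" for \<beta>
  proof -
    have "Min (f ` K) \<le> f \<beta>" by (rule Min_le) (use Kfin that in auto)
    then show ?thesis using fb0 unfolding f_def by simp
  qed
  have tb0: "tdeg \<beta>0 = k" using b0 hsk unfolding K_def homogeneous_in_def by auto
  define mu where "mu = c \<beta>0 / m \<beta>0"
  define y0 where "y0 = (\<lambda>\<alpha>. Poly_Mapping.lookup (Poly_Mapping.single \<alpha> 1 * s ^ (k - tdeg \<alpha>)) \<beta>0 / m \<beta>0)"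
  have m0: "m \<beta>0 > 0" by (rule mpos[OF b0])
  have y0nn: "y0 \<alpha> \<ge> 0" for \<alpha>
    using nn_mult[OF nn_single[of 1] nn_spow, of \<alpha> n "k - tdeg \<alpha>"] m0
    unfolding y0_def nn_def s_def by simp
  have y00: "y0 0 = 1" using m0 unfolding y0_def m_def by simp
  have y0eq: "apply_functional y0 (Poly_Mapping.single \<alpha> 1 * s) = apply_functional y0 (Poly_Mapping.single \<alpha> 1)"
    if "tdeg \<alpha> + 1 \<le> k" for \<alpha>
  proof -
    let ?e = "\<lambda>i. \<alpha> + Poly_Mapping.single i 1"
    have te: "tdeg (?e i) = tdeg \<alpha> + 1" for i by (simp add: tdeg_add)
    have kk: "k - tdeg \<alpha> = Suc (k - tdeg \<alpha> - 1)" using that by simp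
    have "Poly_Mapping.single \<alpha> 1 * s = (\<Sum>i<n. Poly_Mapping.single (?e i) 1)"
      unfolding s_def sumvars_def var_def by (simp add: sum_distrib_left mult_single)
    then have "apply_functional y0 (Poly_Mapping.single \<alpha> 1 * s) = (\<Sum>i<n. y0 (?e i))"
      by (simp add: af_sum af_single)
    also have "\<dots> = (\<Sum>i<n. Poly_Mapping.lookup (Poly_Mapping.single (?e i) 1 * s ^ (k - tdeg \<alpha> - 1)) \<beta>0) / m \<beta>0"
      unfolding y0_def te by (simp add: sum_divide_distrib)
    also have "(\<Sum>i<n. Poly_Mapping.lookup (Poly_Mapping.single (?e i) 1 * s ^ (k - tdeg \<alpha> - 1)) \<beta>0)
        = Poly_Mapping.lookup ((\<Sum>i<n. Poly_Mapping.single (?e i) 1) * s ^ (k - tdeg \<alpha> - 1)) \<beta>0"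
      by (simp add: sum_distrib_right lookup_sum)
    also have "(\<Sum>i<n. Poly_Mapping.single (?e i) 1) * s ^ (k - tdeg \<alpha> - 1) = Poly_Mapping.single \<alpha> 1 * s ^ (k - tdeg \<alpha>)"
      unfolding \<open>Poly_Mapping.single \<alpha> 1 * s = _\<close>[symmetric] by (subst kk) (simp add: mult.assoc)
    finally show ?thesis by (simp add: af_single y0_def)
  qed
  have feas: "lp_feasible n k y0"
    unfolding lp_feasible_def using y00 y0nn y0eq
    by (auto simp: af_one af_single s_def mono_set_def)
  have val: "apply_functional y0 p = mu"
  proof -
    have "apply_functional y0 p = apply_functional y0 (p * s ^ r)"
      using af_reduce[OF feas hp, of r] unfolding s_def k_def by simp
    also have "\<dots> = (\<Sum>\<beta>\<in>Poly_Mapping.keys (p * s ^ r) \<union> {\<beta>0}. c \<beta> * y0 \<beta>)"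
      by (subst af_sup[of "Poly_Mapping.keys (p * s ^ r) \<union> {\<beta>0}"]) (auto simp: c_def mult.commute)
    also have "\<dots> = (\<Sum>\<beta>\<in>Poly_Mapping.keys (p * s ^ r) \<union> {\<beta>0}. if \<beta> = \<beta>0 then c \<beta>0 / m \<beta>0 else 0)"
    proof (rule sum.cong)
      fix \<beta> assume "\<beta> \<in> Poly_Mapping.keys (p * s ^ r) \<union> {\<beta>0}"
      then have "tdeg \<beta> = k" using hc tb0 unfolding homogeneous_in_def by (auto simp: mult.commute)
      then show "c \<beta> * y0 \<beta> = (if \<beta> = \<beta>0 then c \<beta>0 / m \<beta>0 else 0)"
        unfolding y0_def by (simp add: lookup_single when_def)
    qed simp
    also have "\<dots> = mu" unfolding mu_def by (simp add: sum.delta')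
    finally show ?thesis .
  qed
  have muS: "\<forall>\<alpha>. Poly_Mapping.lookup (s ^ r * (p - const mu * s ^ d)) \<alpha> \<ge> 0"
  proof
    fix \<alpha>
    have "s ^ r * (p - const mu * s ^ d) = s ^ r * p - const mu * s ^ k"
      unfolding k_def by (simp add: algebra_simps power_add)
    then have eq: "Poly_Mapping.lookup (s ^ r * (p - const mu * s ^ d)) \<alpha> = c \<alpha> - mu * m \<alpha>"
      by (simp add: lookup_minus lookup_cmul c_def m_def)
    show "Poly_Mapping.lookup (s ^ r * (p - const mu * s ^ d)) \<alpha> \<ge> 0"
    proof (cases "\<alpha> \<in> K")
      case True
      have "mu \<le> c \<alpha> / m \<alpha>" using b0min[OF True] unfolding mu_def .
      then have "mu * m \<alpha> \<le> c \<alpha>" using mpos[OF True] by (simp add: pos_le_divide_eq)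
      then show ?thesis using eq by simp
    next
      case False
      then have "m \<alpha> = 0" unfolding K_def m_def by (simp add: in_keys_iff)
      moreover have "c \<alpha> = 0"
      proof (rule ccontr)
        assume "c \<alpha> \<noteq> 0"
        then have "\<alpha> \<in> Poly_Mapping.keys (s ^ r * p)" unfolding c_def by (simp add: in_keys_iff)
        then have "Poly_Mapping.keys \<alpha> \<subseteq> {..<n}" "tdeg \<alpha> = k" using hc unfolding homogeneous_in_def by auto
        then have "m \<alpha> > 0" using pos unfolding m_def s_def by blast
        with \<open>m \<alpha> = 0\<close> show False by simp
      qed
      ultimately show ?thesis using eq by simp
    qed
  qed
  define S where "S = {lam. \<forall>\<alpha>. Poly_Mapping.lookup (sumvars n ^ r * (p - const lam * sumvars n ^ d)) \<alpha> \<ge> 0}"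
  have muS': "mu \<in> S" using muS unfolding S_def s_def by simp
  have lowS: "\<And>lam. lam \<in> S \<Longrightarrow> lam \<le> mu"
    using lower[OF feas[unfolded k_def] hp] val unfolding S_def by auto
  have "polya_bound n d r p = mu"
    unfolding polya_bound_def S_def[symmetric] by (rule cSup_eq_maximum[OF muS' lowS])
  moreover have "lp_value n (r + d) p = mu"
    unfolding lp_value_def
  proof (rule cInf_eq_minimum)
    show "mu \<in> {apply_functional y p |y. lp_feasible n (r + d) y}"
      using feas val unfolding k_def by auto
  next
    fix v assume "v \<in> {apply_functional y p |y. lp_feasible n (r + d) y}"
    then obtain y where "lp_feasible n (r+d) y" "v = apply_functional y p" by auto
    then show "mu \<le> v" using lower[of n r d y p mu] hp muS unfolding s_def by simp
  qed
  ultimately show ?thesis by simp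
qed


end
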